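(* Let $h$ be a non-degenerate symmetric $(0,2)$-tensor field and let $J_1,J_2$ be $h$-symmetric $(1,1)$-tensor fields on a smooth manifold $M$ such that $J_1J_2=J_2J_1$ and $(J_1-J_2)^2=0$. Define endomorphisms of $TM\oplus T^*M$ by $\hat J_-(X+\eta)=J_1X-(J_1^2+I)h^{-1}(\eta)+h(X)-J_1^*\eta$ and $\hat J_+(X+\eta)=J_2X-(J_2^2-I)h^{-1}(\eta)+h(X)-J_2^*\eta$. Then $\hat J_-^2=-I$, $\hat J_+^2=I$ and $\hat J_-\hat J_+=-\hat J_+\hat J_-$, so that $(\hat J_-,\hat J_+,\hat J_-\hat J_+)$ is a generalized almost para-quaternionic structure on $M$.
   Context: $h$ is viewed as the isomorphism $TM\to T^*M$, $X\mapsto h(X,\cdot)$, with inverse $h^{-1}$; $(J^*\eta)(X)=\eta(JX)$; $J$ is $h$-symmetric if $h(JX,Y)=h(X,JY)$. *)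

theory Defs
  imports "HOL-Analysis.Analysis"
begin

text \<open>Pointwise (fibrewise) setting: a tangent space is a finite-dimensional real
vector space 'a; covectors are linear functionals 'a \<Rightarrow> real; an element X + eta of
T_pM \<oplus> T_p^*M is a pair (X, eta) with eta linear.\<close>

definition nondegenerate :: "('a::real_vector \<Rightarrow> 'a \<Rightarrow> real) \<Rightarrow> bool" where
  "nondegenerate h \<longleftrightarrow> (\<forall>X. (\<forall>Y. h X Y = 0) \<longrightarrow> X = 0)"

definition h_symmetric :: "('a \<Rightarrow> 'a \<Rightarrow> real) \<Rightarrow> ('a \<Rightarrow> 'a) \<Rightarrow> bool" where
  "h_symmetric h J \<longleftrightarrow> (\<forall>X Y. h (J X) Y = h X (J Y))"

definition h_inv :: "('a \<Rightarrow> 'a \<Rightarrow> real) \<Rightarrow> ('a \<Rightarrow> real) \<Rightarrow> 'a" where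
  "h_inv h \<eta> = (THE X. h X = \<eta>)"

definition dual_map :: "('a \<Rightarrow> 'a) \<Rightarrow> ('a \<Rightarrow> real) \<Rightarrow> ('a \<Rightarrow> real)" where
  "dual_map J \<eta> = (\<lambda>X. \<eta> (J X))"

definition J_minus :: "('a::real_vector \<Rightarrow> 'a \<Rightarrow> real) \<Rightarrow> ('a \<Rightarrow> 'a)
    \<Rightarrow> 'a \<times> ('a \<Rightarrow> real) \<Rightarrow> 'a \<times> ('a \<Rightarrow> real)" where
  "J_minus h J1 p = (let X = fst p; \<eta> = snd p; Y = h_inv h \<eta> in
     (J1 X - (J1 (J1 Y) + Y), (\<lambda>Z. h X Z - dual_map J1 \<eta> Z)))"

definition J_plus :: "('a::real_vector \<Rightarrow> 'a \<Rightarrow> real) \<Rightarrow> ('a \<Rightarrow> 'a)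
    \<Rightarrow> 'a \<times> ('a \<Rightarrow> real) \<Rightarrow> 'a \<times> ('a \<Rightarrow> real)" where
  "J_plus h J2 p = (let X = fst p; \<eta> = snd p; Y = h_inv h \<eta> in
     (J2 X - (J2 (J2 Y) - Y), (\<lambda>Z. h X Z - dual_map J2 \<eta> Z)))"

definition gen_almost_para_quaternionic ::
  "('a::real_vector \<times> ('a \<Rightarrow> real) \<Rightarrow> 'a \<times> ('a \<Rightarrow> real)) \<Rightarrow>
   ('a \<times> ('a \<Rightarrow> real) \<Rightarrow> 'a \<times> ('a \<Rightarrow> real)) \<Rightarrow>
   ('a \<times> ('a \<Rightarrow> real) \<Rightarrow> 'a \<times> ('a \<Rightarrow> real)) \<Rightarrow> bool" where
  "gen_almost_para_quaternionic J K L \<longleftrightarrow>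
     (\<forall>X \<eta>. linear \<eta> \<longrightarrow>
        J (J (X, \<eta>)) = (- X, - \<eta>) \<and> K (K (X, \<eta>)) = (X, \<eta>) \<and> L (L (X, \<eta>)) = (X, \<eta>) \<and>
        J (K (X, \<eta>)) = L (X, \<eta>) \<and> K (J (X, \<eta>)) = (- fst (L (X, \<eta>)), - snd (L (X, \<eta>))))"

end

theory Submission
  imports Defs
begin

lemma repr_functional:
  fixes f :: "'a::euclidean_space \<Rightarrow> real"
  assumes "linear f"
  shows "f Z = (\<Sum>b\<in>Basis. f b *\<^sub>R b) \<bullet> Z"
proof -
  have "f Z = f (\<Sum>b\<in>Basis. (Z \<bullet> b) *\<^sub>R b)"
    by (simp add: euclidean_representation)
  also have "\<dots> = (\<Sum>b\<in>Basis. (Z \<bullet> b) * f b)"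
    by (simp add: linear_sum[OF assms] linear_scale[OF assms])
  also have "\<dots> = (\<Sum>b\<in>Basis. f b *\<^sub>R b) \<bullet> Z"
    unfolding inner_sum_left inner_scaleR_left by (rule sum.cong) (simp_all add: inner_commute)
  finally show ?thesis .
qed

lemma h_surj:
  fixes h :: "'a::euclidean_space \<Rightarrow> 'a \<Rightarrow> real"
  assumes "bilinear h" "nondegenerate h" "linear \<eta>"
  shows "\<exists>Y. \<eta> = h Y"
proof -
  define M where "M X = (\<Sum>b\<in>Basis. h X b *\<^sub>R b)" for X
  have l1: "linear (h X)" for X using assms(1) by (simp add: bilinear_def)
  have l2: "linear (\<lambda>X. h X Z)" for Z using assms(1) by (simp add: bilinear_def)
  have MZ: "h X Z = M X \<bullet> Z" for X Z unfolding M_def by (rule repr_functional[OF l1])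
  have linM: "linear M"
    unfolding M_def linear_iff
    by (simp add: linear_add[OF l2] linear_scale[OF l2] sum.distrib scaleR_add_left
        scaleR_sum_right)
  have "inj M"
  proof (rule linear_injective_0[OF linM, THEN iffD2], intro allI impI)
    fix X assume "M X = 0"
    then have "\<forall>Y. h X Y = 0" by (simp add: MZ)
    then show "X = 0" using assms(2) by (simp add: nondegenerate_def)
  qed
  then have "surj M" using linear_injective_imp_surjective[OF linM] by simp
  then obtain Y where Y: "M Y = (\<Sum>b\<in>Basis. \<eta> b *\<^sub>R b)" by (metis surjD)
  have "h Y Z = \<eta> Z" for Z
    using MZ[of Y Z] repr_functional[OF assms(3), of Z] Y by simp
  then have "h Y = \<eta>" by (simp add: fun_eq_iff)
  then show ?thesis by blast
qed

lemma h_inv_h: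
  fixes h :: "'a::real_vector \<Rightarrow> 'a \<Rightarrow> real"
  assumes "bilinear h" "nondegenerate h"
  shows "h_inv h (h Y) = Y"
  unfolding h_inv_def
proof (rule the_equality)
  fix X assume "h X = h Y"
  have l2: "linear (\<lambda>X. h X Z)" for Z using assms(1) by (simp add: bilinear_def)
  have "h (X - Y) Z = 0" for Z using linear_diff[OF l2, of X Y Z] \<open>h X = h Y\<close> by simp
  then have "X - Y = 0" using assms(2) unfolding nondegenerate_def by blast
  then show "X = Y" by simp
qed simp

theorem proposition3p1:
  fixes h :: "'a::euclidean_space \<Rightarrow> 'a \<Rightarrow> real"
    and J1 J2 :: "'a \<Rightarrow> 'a"
  assumes "bilinear h"
    and "\<And>X Y. h X Y = h Y X"
    and "nondegenerate h"
    and "linear J1" and "linear J2"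
    and "h_symmetric h J1" and "h_symmetric h J2"
    and "\<And>X. J1 (J2 X) = J2 (J1 X)"
    and "\<And>X. J1 (J1 X - J2 X) - J2 (J1 X - J2 X) = 0"
  shows "(\<forall>X \<eta>. linear \<eta> \<longrightarrow>
            J_minus h J1 (J_minus h J1 (X, \<eta>)) = (- X, - \<eta>)
          \<and> J_plus h J2 (J_plus h J2 (X, \<eta>)) = (X, \<eta>)
          \<and> J_minus h J1 (J_plus h J2 (X, \<eta>))
              = (- fst (J_plus h J2 (J_minus h J1 (X, \<eta>))),
                 - snd (J_plus h J2 (J_minus h J1 (X, \<eta>)))))
       \<and> gen_almost_para_quaternionic (J_minus h J1) (J_plus h J2)
            (J_minus h J1 \<circ> J_plus h J2)"
proof -
  note L1 = linear_add[OF assms(4)] linear_diff[OF assms(4)] linear_neg[OF assms(4)]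
  note L2 = linear_add[OF assms(5)] linear_diff[OF assms(5)] linear_neg[OF assms(5)]
  have l2: "linear (\<lambda>X. h X Z)" for Z using assms(1) by (simp add: bilinear_def)
  have hdiff: "h (X - Y) Z = h X Z - h Y Z" for X Y Z using linear_diff[OF l2] .
  have hneg: "h (- X) = - h X" for X using linear_neg[OF l2] by (auto simp: fun_eq_iff)
  have hinv: "h_inv h (h Y) = Y" for Y by (rule h_inv_h[OF assms(1,3)])
  have s1: "h Y (J1 Z) = h (J1 Y) Z" for Y Z using assms(6) by (simp add: h_symmetric_def)
  have s2: "h Y (J2 Z) = h (J2 Y) Z" for Y Z using assms(7) by (simp add: h_symmetric_def)
  have Am: "J_minus h J1 (X, h Y) = (J1 X - (J1 (J1 Y) + Y), h (X - J1 Y))" for X Y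
    by (simp add: J_minus_def hinv dual_map_def hdiff s1 Let_def fun_eq_iff)
  have Ap: "J_plus h J2 (X, h Y) = (J2 X - (J2 (J2 Y) - Y), h (X - J2 Y))" for X Y
    by (simp add: J_plus_def hinv dual_map_def hdiff s2 Let_def fun_eq_iff)
  have C: "J1 (J2 X) = J2 (J1 X)" for X by (rule assms(8))
  have N: "J1 (J1 X) = 2 *\<^sub>R J2 (J1 X) - J2 (J2 X)" for X
    using assms(9)[of X] C[of X] by (simp add: L1 L2 C algebra_simps scaleR_2)
  have S: "J_minus h J1 (J_minus h J1 (X, h Y)) = (- X, - h Y)
          \<and> J_plus h J2 (J_plus h J2 (X, h Y)) = (X, h Y)
          \<and> J_minus h J1 (J_plus h J2 (X, h Y))
              = (- fst (J_plus h J2 (J_minus h J1 (X, h Y))),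
                 - snd (J_plus h J2 (J_minus h J1 (X, h Y))))" for X Y
    by (simp add: Am Ap L1 L2 C N hneg[symmetric] algebra_simps scaleR_2)
  have G: "(J_minus h J1 \<circ> J_plus h J2) ((J_minus h J1 \<circ> J_plus h J2) (X, h Y)) = (X, h Y)
     \<and> J_plus h J2 (J_minus h J1 (X, h Y)) = (- fst ((J_minus h J1 \<circ> J_plus h J2) (X, h Y)),
           - snd ((J_minus h J1 \<circ> J_plus h J2) (X, h Y)))" for X Y
    by (simp add: Am Ap L1 L2 C N hneg[symmetric] algebra_simps scaleR_2)
  show ?thesis
    unfolding gen_almost_para_quaternionic_def
  proof (intro conjI allI impI)
    fix X :: 'a and \<eta> :: "'a \<Rightarrow> real" assume "linear \<eta>"
    then obtain Y where "\<eta> = h Y" using h_surj[OF assms(1,3)] by blast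
    then show "J_minus h J1 (J_minus h J1 (X, \<eta>)) = (- X, - \<eta>)"
      "J_plus h J2 (J_plus h J2 (X, \<eta>)) = (X, \<eta>)"
      "J_minus h J1 (J_plus h J2 (X, \<eta>))
              = (- fst (J_plus h J2 (J_minus h J1 (X, \<eta>))),
                 - snd (J_plus h J2 (J_minus h J1 (X, \<eta>))))"
      "J_minus h J1 (J_minus h J1 (X, \<eta>)) = (- X, - \<eta>)"
      "J_plus h J2 (J_plus h J2 (X, \<eta>)) = (X, \<eta>)"
      "(J_minus h J1 \<circ> J_plus h J2) ((J_minus h J1 \<circ> J_plus h J2) (X, \<eta>)) = (X, \<eta>)"
      "J_minus h J1 (J_plus h J2 (X, \<eta>)) = (J_minus h J1 \<circ> J_plus h J2) (X, \<eta>)"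
      "J_plus h J2 (J_minus h J1 (X, \<eta>)) = (- fst ((J_minus h J1 \<circ> J_plus h J2) (X, \<eta>)),
           - snd ((J_minus h J1 \<circ> J_plus h J2) (X, \<eta>)))"
      using S[of X Y] G[of X Y] by simp_all
  qed
qed

end
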